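(* Let $g:\mathbb{C}\to\mathbb{C}$ be a harmonic map (real and imaginary parts harmonic) such that $\mathcal{D}(g(\mathbb{C}))$ contains no pair of antipodal points. Then there exist $\theta\in[0,2\pi)$, $\rho>0$ and $a>1$ such that, writing $f=e^{i\theta}g$ and $\mathcal{R}_f=f(\mathbb{C})$, $$\mathcal{R}_f\subset\overline{D}(0,\rho)\cup\Big(\{u+iv:\ |v|\le a|u|\}\setminus\{u+iv:\ |v|\le -\tfrac{1}{a}u\}\Big).$$
   Context: $\partial\mathbb{D}$ is the unit circle. For $\mathcal{R}\subset\mathbb{C}$, $e^{i\theta}\in\partial\mathbb{D}$ is an asymptotic direction of $\mathcal{R}$ if there exist $w_n\in\mathcal{R}$ and $\varepsilon_n>0$, $\varepsilon_n\to0$, with $\varepsilon_n w_n\to e^{i\theta}$; $\mathcal{D}(\mathcal{R})$ is the set of asymptotic directions. *)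

theory Defs
  imports "HOL-Analysis.Analysis"
begin

definition harmonic :: "(complex \<Rightarrow> real) \<Rightarrow> bool" where
  "harmonic u \<longleftrightarrow>
     (\<exists>(Du :: complex \<Rightarrow> complex \<Rightarrow>\<^sub>L real) (D2u :: complex \<Rightarrow> complex \<Rightarrow>\<^sub>L (complex \<Rightarrow>\<^sub>L real)).
        (\<forall>z. (u has_derivative blinfun_apply (Du z)) (at z)) \<and>
        (\<forall>z. (Du has_derivative blinfun_apply (D2u z)) (at z)) \<and>
        continuous_on UNIV D2u \<and>
        (\<forall>z. blinfun_apply (blinfun_apply (D2u z) 1) 1
              + blinfun_apply (blinfun_apply (D2u z) \<i>) \<i> = 0))"

definition harmonic_map :: "(complex \<Rightarrow> complex) \<Rightarrow> bool" where
  "harmonic_map g \<longleftrightarrow> harmonic (\<lambda>z. Re (g z)) \<and> harmonic (\<lambda>z. Im (g z))"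

definition asym_dirs :: "complex set \<Rightarrow> complex set" where
  "asym_dirs R = {w. cmod w = 1 \<and>
     (\<exists>(wn :: nat \<Rightarrow> complex) (eps :: nat \<Rightarrow> real).
        (\<forall>n. wn n \<in> R \<and> eps n > 0) \<and> eps \<longlonglongrightarrow> 0 \<and>
        (\<lambda>n. complex_of_real (eps n) * wn n) \<longlonglongrightarrow> w)}"

end

theory Submission
  imports Defs
begin

lemma sq_aux:
  fixes s t :: real
  assumes "s \<ge> 0" "t \<ge> 0" "s^2 + t^2 = 1"
  shows "(1 - t)^2 \<le> s^2"
proof -
  have t1: "t \<le> 1" using assms abs_square_le_1[of t] by (simp; smt (verit) zero_le_power2)
  have "t^2 \<le> t" using t1 assms(2) by (simp add: power2_eq_square mult_left_le)
  hence "1 - t \<le> s^2" using assms(3) by linarith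
  moreover have "(1-t)^2 \<le> 1 - t" using t1 assms(2) by (simp add: power2_eq_square mult_left_le)
  ultimately show ?thesis by linarith
qed

lemma key_unit:
  fixes u v d a :: real
  assumes uv: "u^2 + v^2 = 1" and d: "d > 0" and a: "a = 2/d + 2"
    and h1: "(1+u)^2 + v^2 \<ge> d^2" and h2: "u^2 + (v-1)^2 \<ge> d^2" and h3: "u^2 + (v+1)^2 \<ge> d^2"
  shows "\<bar>v\<bar> \<le> a * \<bar>u\<bar> \<and> \<not> \<bar>v\<bar> \<le> - (1/a) * u"
proof -
  have a1: "a > 1" using a d by (smt (verit) divide_pos_pos)
  have ad: "a * d > 2" using a d by (simp add: algebra_simps)
  have ad2: "a^2 * d^2 > 4"
  proof -
    have "(2::real)^2 < (a*d)^2" by (rule power_strict_mono) (use ad in auto)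
    thus ?thesis by (simp add: power_mult_distrib)
  qed
  have uv': "\<bar>u\<bar>^2 + \<bar>v\<bar>^2 = 1" using uv by simp
  have A: "\<bar>v\<bar> \<le> a * \<bar>u\<bar>"
  proof (rule ccontr)
    assume "\<not> ?thesis"
    hence lt: "a * \<bar>u\<bar> < \<bar>v\<bar>" by simp
    have "(a*\<bar>u\<bar>)^2 < \<bar>v\<bar>^2" by (rule power_strict_mono) (use lt a1 in auto)
    hence "a^2 * u^2 < v^2" by (simp add: power_mult_distrib)
    hence au: "a^2 * u^2 \<le> 1" using uv zero_le_power2[of u] by linarith
    have q: "(1 - \<bar>v\<bar>)^2 \<le> u^2" using sq_aux[OF _ _ uv'] by simp
    have "min (u^2 + (v-1)^2) (u^2 + (v+1)^2) \<le> u^2 + (1 - \<bar>v\<bar>)^2"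
      by (cases "v \<ge> 0") (auto simp: power2_eq_square algebra_simps)
    hence "d^2 \<le> 2 * u^2" using h2 h3 q by linarith
    hence "a^2 * d^2 \<le> a^2 * (2 * u^2)" by (simp add: mult_left_mono)
    thus False using ad2 au by linarith
  qed
  have B: "\<not> \<bar>v\<bar> \<le> - (1/a) * u"
  proof
    assume le: "\<bar>v\<bar> \<le> - (1/a) * u"
    have "a * \<bar>v\<bar> \<le> -u" using le a1 by (simp add: field_simps)
    hence un: "u \<le> 0" using a1 by (smt (verit) abs_ge_zero mult_nonneg_nonneg)
    have "(a*\<bar>v\<bar>)^2 \<le> (-u)^2" by (rule power_mono) (use \<open>a * \<bar>v\<bar> \<le> -u\<close> a1 in auto)
    hence "a^2 * v^2 \<le> u^2" by (simp add: power_mult_distrib)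
    hence av: "a^2 * v^2 \<le> 1" using uv zero_le_power2[of v] by linarith
    have q: "(1 - \<bar>u\<bar>)^2 \<le> v^2" using sq_aux[of "\<bar>v\<bar>" "\<bar>u\<bar>"] uv' by simp
    hence "(1 + u)^2 \<le> v^2" using un by simp
    hence "d^2 \<le> 2 * v^2" using h1 by linarith
    hence "a^2 * d^2 \<le> a^2 * (2 * v^2)" by (simp add: mult_left_mono)
    thus False using ad2 av by linarith
  qed
  show ?thesis using A B by blast
qed


theorem corollary3:
  fixes g :: "complex \<Rightarrow> complex"
  assumes "harmonic_map g"
    and "\<not> (\<exists>w. w \<in> asym_dirs (range g) \<and> - w \<in> asym_dirs (range g))"
  shows "\<exists>(\<theta>::real) (\<rho>::real) (a::real). 0 \<le> \<theta> \<and> \<theta> < 2 * pi \<and> \<rho> > 0 \<and> a > 1 \<and>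
     range (\<lambda>z. exp (\<i> * complex_of_real \<theta>) * g z) \<subseteq>
       cball 0 \<rho> \<union> ({w. \<bar>Im w\<bar> \<le> a * \<bar>Re w\<bar>} - {w. \<bar>Im w\<bar> \<le> - (1 / a) * Re w})"
proof -
  define R where "R = range g"
  define C where "C = {w. cmod w = 1 \<and> (\<forall>\<delta>>0. \<forall>\<rho>. \<exists>z\<in>R. \<rho> < cmod z \<and>
       cmod (z / complex_of_real (cmod z) - w) < \<delta>)}"
  have CD: "w \<in> asym_dirs R" if w: "w \<in> C" for w
  proof -
    have "\<forall>n. \<exists>z. z \<in> R \<and> real n + 1 < cmod z \<and> cmod (z / complex_of_real (cmod z) - w) < 1 / real (Suc n)"
    proof
      fix n
      have H: "\<forall>\<delta>>0. \<forall>\<rho>. \<exists>z\<in>R. \<rho> < cmod z \<and> cmod (z / complex_of_real (cmod z) - w) < \<delta>"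
        using w by (simp add: C_def)
      have "(0::real) < 1 / real (Suc n)" by simp
      from H[rule_format, OF this, of "real n + 1"]
      show "\<exists>z. z \<in> R \<and> real n + 1 < cmod z \<and> cmod (z / complex_of_real (cmod z) - w) < 1 / real (Suc n)"
        by blast
    qed
    then obtain zn where zn: "\<And>n. zn n \<in> R" "\<And>n. real n + 1 < cmod (zn n)"
      "\<And>n. cmod (zn n / complex_of_real (cmod (zn n)) - w) < 1 / real (Suc n)"
      by metis
    define eps where "eps n = 1 / cmod (zn n)" for n
    have pos: "eps n > 0" for n using zn(2)[of n] unfolding eps_def
      by (smt (verit) of_nat_0_le_iff divide_pos_pos)
    have "norm (eps n) < 1 / real (Suc n)" for n
    proof -
      have "real (Suc n) < cmod (zn n)" using zn(2)[of n] by simp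
      thus ?thesis unfolding eps_def using pos[of n]
        by (simp add: eps_def frac_less2)
    qed
    hence e0: "eps \<longlonglongrightarrow> 0" by (rule LIMSEQ_norm_0)
    have eq: "complex_of_real (eps n) * zn n = zn n / complex_of_real (cmod (zn n))" for n
      by (simp add: eps_def divide_inverse mult.commute)
    have "(\<lambda>n. complex_of_real (eps n) * zn n - w) \<longlonglongrightarrow> 0"
      by (rule LIMSEQ_norm_0) (use zn(3) in \<open>simp add: eq\<close>)
    hence "(\<lambda>n. complex_of_real (eps n) * zn n) \<longlonglongrightarrow> w" by (rule LIM_zero_cancel)
    moreover have "cmod w = 1" using w by (simp add: C_def)
    ultimately show ?thesis unfolding asym_dirs_def using zn(1) pos e0 by blast
  qed
  have disj: "- w \<notin> C" if "w \<in> C" for w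
    using assms(2) CD that unfolding R_def by blast
  have CS: "C \<subseteq> sphere 0 1" by (auto simp: C_def)
  have closedC: "closed C"
  proof -
    have "closure C \<subseteq> C"
    proof
      fix x assume x: "x \<in> closure C"
      have "closure C \<subseteq> sphere 0 1" by (rule closure_minimal[OF CS closed_sphere])
      hence x1: "cmod x = 1" using x by auto
      have "\<exists>z\<in>R. \<rho> < cmod z \<and> cmod (z / complex_of_real (cmod z) - x) < \<delta>" if d: "\<delta> > 0" for \<delta> \<rho>
      proof -
        have ap: "\<forall>\<epsilon>>0. \<exists>y\<in>C. dist y x < \<epsilon>" using x closure_approachable[of x C] by blast
        have d2: "\<delta>/2 > 0" using d by simp
        obtain y where y: "y \<in> C" "dist y x < \<delta>/2" using ap[rule_format, OF d2] by blast
        have Hy: "\<forall>\<delta>>0. \<forall>\<rho>. \<exists>z\<in>R. \<rho> < cmod z \<and> cmod (z / complex_of_real (cmod z) - y) < \<delta>"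
          using y(1) by (simp add: C_def)
        obtain z where z: "z \<in> R" "\<rho> < cmod z" "cmod (z / complex_of_real (cmod z) - y) < \<delta>/2"
          using Hy[rule_format, OF d2, of \<rho>] by blast
        have "cmod (z / complex_of_real (cmod z) - x) \<le> cmod (z / complex_of_real (cmod z) - y) + cmod (y - x)"
          using norm_triangle_ineq[of "z / complex_of_real (cmod z) - y" "y - x"] by simp
        also have "\<dots> < \<delta>" using z(3) y(2) by (simp add: dist_norm)
        finally show ?thesis using z by blast
      qed
      thus "x \<in> C" using x1 unfolding C_def by blast
    qed
    thus ?thesis by (simp add: closure_subset_eq)
  qed
  obtain p where p: "cmod p = 1" "p \<notin> C" "\<i> * p \<notin> C" "- (\<i> * p) \<notin> C"
  proof (rule ccontr)
    assume "\<not> thesis"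
    hence H: "\<And>p. cmod p = 1 \<Longrightarrow> p \<in> C \<or> \<i> * p \<in> C \<or> - (\<i> * p) \<in> C" using that by blast
    have cover: "sphere 0 1 \<subseteq> C \<union> uminus ` C"
    proof
      fix x :: complex assume "x \<in> sphere 0 1"
      hence x1: "cmod x = 1" by simp
      show "x \<in> C \<union> uminus ` C"
      proof (rule ccontr)
        assume nx: "x \<notin> C \<union> uminus ` C"
        hence n1: "x \<notin> C" and n2: "- x \<notin> C" by (auto simp: image_iff)
        have "\<i> * x \<in> C" using H[of "\<i> * x"] x1 n1 n2 by (simp add: norm_mult)
        moreover have "- (\<i> * x) \<in> C" using H[of "- (\<i> * x)"] x1 n1 n2 by (simp add: norm_mult)
        ultimately show False using disj by blast
      qed
    qed
    have conn: "connected (sphere (0::complex) 1)" by (rule connected_sphere) simp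
    have cl2: "closed (uminus ` C)" using closed_negations[OF closedC] by simp
    have inter: "C \<inter> uminus ` C \<inter> sphere 0 1 = {}" using disj by auto
    have one: "(1::complex) \<in> sphere 0 1" by simp
    have ne: "C \<inter> sphere 0 1 \<noteq> {} \<and> uminus ` C \<inter> sphere 0 1 \<noteq> {}"
    proof (cases "(1::complex) \<in> C")
      case True
      then show ?thesis using CS by (auto intro!: exI[of _ 1] exI[of _ "-1"] image_eqI[of "-1" uminus 1])
    next
      case False
      hence "(1::complex) \<in> uminus ` C" using cover one by blast
      hence "(-1::complex) \<in> C" by (auto simp: image_iff) (metis minus_minus)
      then show ?thesis using CS \<open>(1::complex) \<in> uminus ` C\<close> by auto
    qed
    show False using conn unfolding connected_closed using closedC cl2 cover inter ne by blast
  qed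
  have far: "\<exists>\<delta>>0. \<exists>\<rho>. \<forall>z\<in>R. \<rho> < cmod z \<longrightarrow> \<delta> \<le> cmod (z / complex_of_real (cmod z) - q)"
    if "cmod q = 1" "q \<notin> C" for q
    using that unfolding C_def by (auto simp: not_less) (meson not_le)
  obtain d1 r1 where d1: "d1 > 0" "\<And>z. z \<in> R \<Longrightarrow> r1 < cmod z \<Longrightarrow> d1 \<le> cmod (z / complex_of_real (cmod z) - p)"
    using far[OF p(1) p(2)] by blast
  obtain d2 r2 where d2: "d2 > 0" "\<And>z. z \<in> R \<Longrightarrow> r2 < cmod z \<Longrightarrow> d2 \<le> cmod (z / complex_of_real (cmod z) - \<i> * p)"
    using far[OF _ p(3)] p(1) by (metis norm_ii norm_mult mult_1)
  obtain d3 r3 where d3: "d3 > 0" "\<And>z. z \<in> R \<Longrightarrow> r3 < cmod z \<Longrightarrow> d3 \<le> cmod (z / complex_of_real (cmod z) - - (\<i> * p))"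
    using far[OF _ p(4)] p(1) by (metis norm_ii norm_mult mult_1 norm_minus_cancel)
  define d where "d = min d1 (min d2 d3)"
  define \<rho> where "\<rho> = max 1 (max r1 (max r2 r3))"
  define a where "a = 2 / d + 2"
  define r where "r = - cnj p"
  have dpos: "d > 0" using d1 d2 d3 by (simp add: d_def)
  have a1: "a > 1" using dpos by (simp add: a_def) (smt (verit) divide_pos_pos)
  have r1': "cmod r = 1" using p(1) by (simp add: r_def)
  have rp: "r * p = -1"
  proof -
    have "p * cnj p = 1" using complex_norm_square[of p] p(1) by simp
    thus ?thesis by (simp add: r_def mult.commute)
  qed
  define \<theta> where "\<theta> = Arg2pi r"
  have th: "0 \<le> \<theta>" "\<theta> < 2 * pi" "exp (\<i> * complex_of_real \<theta>) = r"
    using Arg2pi[of r] r1' unfolding \<theta>_def is_Arg_def by auto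
  have main: "r * g z \<in> cball 0 \<rho> \<union> ({w. \<bar>Im w\<bar> \<le> a * \<bar>Re w\<bar>} - {w. \<bar>Im w\<bar> \<le> - (1 / a) * Re w})" for z
  proof (cases "cmod (g z) \<le> \<rho>")
    case True
    then show ?thesis using r1' by (simp add: norm_mult)
  next
    case False
    define w where "w = g z"
    have wR: "w \<in> R" by (simp add: w_def R_def)
    have wbig: "\<rho> < cmod w" using False by (simp add: w_def)
    hence "1 < cmod w" by (simp add: \<rho>_def)
    hence wpos: "cmod w > 0" by linarith
    define e where "e = r * (w / complex_of_real (cmod w))"
    have e1: "cmod e = 1" using r1' wpos by (simp add: e_def norm_mult norm_divide)
    have y: "r * w = complex_of_real (cmod w) * e" using wpos by (simp add: e_def)
    have E1: "e + 1 = r * (w / complex_of_real (cmod w) - p)" using rp by (simp add: e_def algebra_simps)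
    have E2: "e + \<i> = r * (w / complex_of_real (cmod w) - \<i> * p)" using rp
      by (simp add: e_def algebra_simps)
    have E3: "e - \<i> = r * (w / complex_of_real (cmod w) - - (\<i> * p))" using rp
      by (simp add: e_def algebra_simps)
    have n1: "d \<le> cmod (e + 1)" using d1(2)[OF wR] wbig r1' unfolding E1
      by (simp add: norm_mult d_def \<rho>_def)
    have n2: "d \<le> cmod (e + \<i>)" using d2(2)[OF wR] wbig r1' unfolding E2
      by (simp add: norm_mult d_def \<rho>_def)
    have n3: "d \<le> cmod (e - \<i>)" using d3(2)[OF wR] wbig r1' unfolding E3
      by (simp add: norm_mult d_def \<rho>_def)
    have sq: "d^2 \<le> cmod q ^ 2" if "d \<le> cmod q" for q
      using that dpos by (simp add: power_mono)
    have "(Re e)^2 + (Im e)^2 = 1" using e1 cmod_power2[of e] by simp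
    moreover have "d^2 \<le> (1 + Re e)^2 + (Im e)^2" using sq[OF n1] cmod_power2[of "e+1"] by (simp add: add.commute)
    moreover have "d^2 \<le> (Re e)^2 + (Im e - 1)^2" using sq[OF n3] cmod_power2[of "e-\<i>"] by simp
    moreover have "d^2 \<le> (Re e)^2 + (Im e + 1)^2" using sq[OF n2] cmod_power2[of "e+\<i>"] by simp
    ultimately have K: "\<bar>Im e\<bar> \<le> a * \<bar>Re e\<bar> \<and> \<not> \<bar>Im e\<bar> \<le> - (1/a) * Re e"
      using key_unit[OF _ dpos a_def] by blast
    let ?m = "cmod w"
    have "\<bar>Im (r * w)\<bar> = ?m * \<bar>Im e\<bar>" "\<bar>Re (r * w)\<bar> = ?m * \<bar>Re e\<bar>" "Re (r*w) = ?m * Re e"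
      unfolding y by (simp_all add: abs_mult)
    hence "\<bar>Im (r * w)\<bar> \<le> a * \<bar>Re (r * w)\<bar> \<and> \<not> \<bar>Im (r * w)\<bar> \<le> - (1/a) * Re (r * w)"
    proof -
      have P1: "?m * \<bar>Im e\<bar> \<le> a * (?m * \<bar>Re e\<bar>)"
        using K wpos mult_left_mono[of "\<bar>Im e\<bar>" "a * \<bar>Re e\<bar>" ?m] by (simp add: algebra_simps)
      have P2: "\<not> ?m * \<bar>Im e\<bar> \<le> - (1/a) * (?m * Re e)"
      proof
        assume "?m * \<bar>Im e\<bar> \<le> - (1/a) * (?m * Re e)"
        hence "?m * \<bar>Im e\<bar> \<le> ?m * (- (1/a) * Re e)" by (simp add: algebra_simps)
        hence "\<bar>Im e\<bar> \<le> - (1/a) * Re e" using wpos by (simp only: mult_le_cancel_left_pos)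
        thus False using K by blast
      qed
      show ?thesis using P1 P2 \<open>\<bar>Im (r * w)\<bar> = ?m * \<bar>Im e\<bar>\<close> \<open>\<bar>Re (r * w)\<bar> = ?m * \<bar>Re e\<bar>\<close>
        \<open>Re (r*w) = ?m * Re e\<close> by simp
    qed
    thus ?thesis by (simp add: w_def)
  qed
  have sub: "range (\<lambda>z. exp (\<i> * complex_of_real \<theta>) * g z) \<subseteq>
       cball 0 \<rho> \<union> ({w. \<bar>Im w\<bar> \<le> a * \<bar>Re w\<bar>} - {w. \<bar>Im w\<bar> \<le> - (1 / a) * Re w})"
    unfolding th(3) using main by blast
  have rho0: "\<rho> > 0" by (simp add: \<rho>_def)
  show ?thesis using th(1,2) rho0 a1 sub by blast
qed

end
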